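(* For any integer $k\geq 1$, every strongly $k$-connected tournament $T$ on $n$ vertices contains a strongly $k$-connected spanning subgraph $D$ with $|E(D)|\leq (5k-2)n + \binom{5k}{2}$.
   Context: A tournament is an orientation of a complete simple graph. A digraph $D$ is strongly connected if for any two vertices $u,v$ there is a directed path from $u$ to $v$. A digraph $D$ is strongly $k$-connected if $|V(D)| \geq k+1$ and for every set $S \subseteq V(D)$ with $|S| \leq k-1$, the digraph $D - S$ is strongly connected. $E(D)$ is the arc set of $D$. *)

theory Defs
  imports Main
begin

definition digraph :: "'a set \<Rightarrow> ('a \<times> 'a) set \<Rightarrow> bool" where
  "digraph V E \<longleftrightarrow> finite V \<and> E \<subseteq> V \<times> V \<and> (\<forall>v. (v, v) \<notin> E)"

definition tournament :: "'a set \<Rightarrow> ('a \<times> 'a) set \<Rightarrow> bool" where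
  "tournament V E \<longleftrightarrow> digraph V E \<and>
     (\<forall>u\<in>V. \<forall>v\<in>V. u \<noteq> v \<longrightarrow> ((u, v) \<in> E \<longleftrightarrow> (v, u) \<notin> E))"

definition strongly_connected :: "'a set \<Rightarrow> ('a \<times> 'a) set \<Rightarrow> bool" where
  "strongly_connected V E \<longleftrightarrow>
     (\<forall>u\<in>V. \<forall>v\<in>V. (u, v) \<in> (E \<inter> (V \<times> V))\<^sup>*)"

definition del_verts :: "'a set \<Rightarrow> ('a \<times> 'a) set \<Rightarrow> 'a set \<Rightarrow> 'a set \<times> ('a \<times> 'a) set" where
  "del_verts V E S = (V - S, E \<inter> ((V - S) \<times> (V - S)))"

definition strongly_k_connected :: "nat \<Rightarrow> 'a set \<Rightarrow> ('a \<times> 'a) set \<Rightarrow> bool" where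
  "strongly_k_connected k V E \<longleftrightarrow> card V \<ge> k + 1 \<and>
     (\<forall>S. S \<subseteq> V \<and> card S \<le> k - 1 \<longrightarrow>
        strongly_connected (fst (del_verts V E S)) (snd (del_verts V E S)))"

end

theory Submission
  imports Defs
begin


definition fwd :: "('a \<times> 'a) set \<Rightarrow> ('a \<Rightarrow> nat) \<Rightarrow> nat" where
  "fwd T f = card {(x,y) \<in> T. f x < f y}"

lemma median_exists:
  assumes tour: "tournament V T" and cV: "card V = n"
  shows "\<exists>pos. bij_betw pos V {..<n} \<and> (\<forall>f. bij_betw f V {..<n} \<longrightarrow> fwd T f \<le> fwd T pos)"
proof -
  have fin: "finite V" using tour unfolding tournament_def digraph_def by auto
  have TV: "T \<subseteq> V \<times> V" using tour unfolding tournament_def digraph_def by auto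
  have finT: "finite T" using TV fin by (meson finite_SigmaI rev_finite_subset)
  obtain h where h: "bij_betw h V {0..<n}" using ex_bij_betw_finite_nat[OF fin] cV by auto
  have h': "bij_betw h V {..<n}" using h by (simp add: atLeast0LessThan)
  have le: "fwd T f \<le> card T" for f unfolding fwd_def
    by (rule card_mono[OF finT]) auto
  obtain pos where "bij_betw pos V {..<n}" and m: "\<forall>g. bij_betw g V {..<n} \<longrightarrow> card T - fwd T pos \<le> card T - fwd T g"
    using ex_has_least_nat[of "\<lambda>f. bij_betw f V {..<n}" h "\<lambda>f. card T - fwd T f"] h' by blast
  moreover have "\<forall>f. bij_betw f V {..<n} \<longrightarrow> fwd T f \<le> fwd T pos"
    using m le by (metis diff_le_mono2 le_diff_iff' nat_le_linear)
  ultimately show ?thesis by blast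
qed



lemma card_pos_set:
  assumes bij: "bij_betw pos V {..<n}" and I: "I \<subseteq> {..<n}"
  shows "card {y \<in> V. pos y \<in> I} = card I"
proof -
  have inj: "inj_on pos {y \<in> V. pos y \<in> I}" 
    using bij unfolding bij_betw_def by (rule_tac inj_on_subset) auto
  have "pos ` {y \<in> V. pos y \<in> I} = I"
  proof
    show "pos ` {y \<in> V. pos y \<in> I} \<subseteq> I" by blast
    show "I \<subseteq> pos ` {y \<in> V. pos y \<in> I}"
    proof
      fix i assume "i \<in> I"
      then have "i \<in> pos ` V" using I bij unfolding bij_betw_def by blast
      then obtain y where "y \<in> V" "pos y = i" by blast
      then show "i \<in> pos ` {y \<in> V. pos y \<in> I}" using \<open>i \<in> I\<close> by blast
    qed
  qed
  then show ?thesis using card_image[OF inj] by simp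
qed



lemma median_fwd:
  assumes tour: "tournament V T" and bij: "bij_betw pos V {..<n}"
    and mx: "\<forall>f. bij_betw f V {..<n} \<longrightarrow> fwd T f \<le> fwd T pos"
    and v: "v \<in> V" and pt: "pos v + t < n"
  shows "t \<le> 2 * card {y \<in> V. (v,y) \<in> T \<and> pos v < pos y \<and> pos y \<le> pos v + t}"
proof (rule ccontr)
  assume neg: "\<not> ?thesis"
  have fin: "finite V" using tour unfolding tournament_def digraph_def by blast
  have TV: "T \<subseteq> V \<times> V" using tour unfolding tournament_def digraph_def by blast
  have noloop: "(x,x) \<notin> T" for x using tour unfolding tournament_def digraph_def by blast
  have tt: "x \<in> V \<Longrightarrow> y \<in> V \<Longrightarrow> x \<noteq> y \<Longrightarrow> (x,y) \<in> T \<longleftrightarrow> (y,x) \<notin> T" for x y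
    using tour unfolding tournament_def by blast
  have finT: "finite T" using TV fin by (meson finite_SigmaI rev_finite_subset)
  define p where "p = pos v"
  define M where "M = {y \<in> V. p < pos y \<and> pos y \<le> p + t}"
  define pos' where "pos' z = (if z = v then p + t else if p < pos z \<and> pos z \<le> p + t then pos z - 1 else pos z)" for z
  have inj: "inj_on pos V" using bij bij_betw_def by blast
  have rng: "z \<in> V \<Longrightarrow> pos z < n" for z using bij bij_betwE by blast
  have np: "z \<in> V \<Longrightarrow> z \<noteq> v \<Longrightarrow> pos z \<noteq> p" for z using inj v p_def by (metis inj_on_eq_iff)
  have cV: "card V = n" using bij by (metis bij_betw_same_card card_lessThan)
  have pv: "pos' v = p + t" unfolding pos'_def by simp
  have pM: "z \<in> V \<Longrightarrow> z \<noteq> v \<Longrightarrow> p < pos z \<Longrightarrow> pos z \<le> p + t \<Longrightarrow> pos' z = pos z - 1" for z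
    unfolding pos'_def by simp
  have pO: "z \<in> V \<Longrightarrow> z \<noteq> v \<Longrightarrow> \<not> (p < pos z \<and> pos z \<le> p + t) \<Longrightarrow> pos' z = pos z" for z
    unfolding pos'_def by auto
  have ord: "x \<in> V \<Longrightarrow> y \<in> V \<Longrightarrow> x \<noteq> v \<Longrightarrow> y \<noteq> v \<Longrightarrow> pos' x < pos' y \<longleftrightarrow> pos x < pos y" for x y
  proof -
    assume a: "x \<in> V" "y \<in> V" "x \<noteq> v" "y \<noteq> v"
    have "pos x \<noteq> p" "pos y \<noteq> p" using np a by auto
    then show ?thesis
      using pM[OF a(1) a(3)] pO[OF a(1) a(3)] pM[OF a(2) a(4)] pO[OF a(2) a(4)]
      by (cases "p < pos x \<and> pos x \<le> p + t"; cases "p < pos y \<and> pos y \<le> p + t") auto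
  qed
  have ordv1: "y \<in> V \<Longrightarrow> y \<noteq> v \<Longrightarrow> pos' v < pos' y \<longleftrightarrow> p + t < pos y" for y
  proof -
    assume a: "y \<in> V" "y \<noteq> v"
    have "pos y \<noteq> p" using np a by auto
    then show ?thesis using pv pM[OF a] pO[OF a] by (cases "p < pos y \<and> pos y \<le> p + t") auto
  qed
  have ordv2: "x \<in> V \<Longrightarrow> x \<noteq> v \<Longrightarrow> pos' x < pos' v \<longleftrightarrow> pos x < p \<or> (p < pos x \<and> pos x \<le> p + t)" for x
  proof -
    assume a: "x \<in> V" "x \<noteq> v"
    have "pos x \<noteq> p" using np a by auto
    then show ?thesis using pv pM[OF a] pO[OF a] by (cases "p < pos x \<and> pos x \<le> p + t") auto
  qed
  have neqv: "y \<in> V \<Longrightarrow> y \<noteq> v \<Longrightarrow> pos' y \<noteq> pos' v" for y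
  proof -
    assume a: "y \<in> V" "y \<noteq> v"
    have "pos y \<noteq> p" using np a by auto
    then show ?thesis using pv pM[OF a] pO[OF a] by (cases "p < pos y \<and> pos y \<le> p + t") auto
  qed
  have bij': "bij_betw pos' V {..<n}"
  proof -
    have "inj_on pos' V"
    proof (rule inj_onI)
      fix x y assume x: "x \<in> V" and y: "y \<in> V" and e: "pos' x = pos' y"
      show "x = y"
      proof (rule ccontr)
        assume xy: "x \<noteq> y"
        then have pxy: "pos x \<noteq> pos y" using inj x y by (meson inj_on_eq_iff)
        show False
        proof (cases "x = v")
          case True
          then show False using neqv[OF y] e xy by metis
        next
          case False
          note xv = False
          show False
          proof (cases "y = v")
            case True
            then show False using neqv[OF x] e xy by metis
          next
            case False
            then show False using ord[OF x y xv False] ord[OF y x False xv] e pxy by linarith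
          qed
        qed
      qed
    qed
    moreover have "pos' ` V \<subseteq> {..<n}"
    proof
      fix m assume "m \<in> pos' ` V"
      then obtain z where z: "z \<in> V" "m = pos' z" by blast
      show "m \<in> {..<n}" using rng[OF z(1)] pt z unfolding pos'_def p_def by (auto split: if_splits)
    qed
    ultimately show ?thesis using cV
      by (metis bij_betw_def card_image card_lessThan card_subset_eq finite_lessThan)
  qed
  define F where "F = {(x,y) \<in> T. pos x < pos y}"
  define F' where "F' = {(x,y) \<in> T. pos' x < pos' y}"
  define Out where "Out = {(a,b) \<in> T. a = v \<and> b \<in> M}"
  define In where "In = {(a,b) \<in> T. b = v \<and> a \<in> M}"
  have eq: "F' = (F - Out) \<union> In"
  proof (rule set_eqI)
    fix e show "e \<in> F' \<longleftrightarrow> e \<in> (F - Out) \<union> In"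
    proof (cases e)
      case (Pair x y)
      show ?thesis
      proof (cases "(x,y) \<in> T")
        case True
        then have xV: "x \<in> V" and yV: "y \<in> V" and xy: "x \<noteq> y" using TV noloop by auto
        have pxy: "pos x \<noteq> pos y" using inj xV yV xy by (meson inj_on_eq_iff)
        show ?thesis
        proof (cases "x = v")
          case True
          then show ?thesis using Pair \<open>(x,y) \<in> T\<close> ordv1[OF yV] xy np[OF yV] p_def yV xV
            unfolding F'_def F_def Out_def In_def M_def by auto
        next
          case False
          note xv = False
          show ?thesis
          proof (cases "y = v")
            case True
            then show ?thesis using Pair \<open>(x,y) \<in> T\<close> ordv2[OF xV] xy np[OF xV] p_def yV xV
              unfolding F'_def F_def Out_def In_def M_def by auto
          next
            case False
            then show ?thesis using Pair \<open>(x,y) \<in> T\<close> ord[OF xV yV xv False] xv xV yV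
              unfolding F'_def F_def Out_def In_def M_def by auto
          qed
        qed
      next
        case False
        then show ?thesis using Pair unfolding F'_def F_def Out_def In_def by auto
      qed
    qed
  qed
  have OF: "Out \<subseteq> F" unfolding Out_def F_def M_def p_def by auto
  have IF: "In \<inter> F = {}" unfolding In_def F_def M_def p_def by auto
  have finF: "finite F" "finite In" "finite Out" unfolding F_def In_def Out_def
    by (rule finite_subset[OF _ finT]; fastforce)+
  have cF': "card F' = card F - card Out + card In"
  proof -
    have "card F' = card (F - Out) + card In" unfolding eq
      by (rule card_Un_disjoint) (use finF IF in auto)
    moreover have "card (F - Out) = card F - card Out" using OF finF by (simp add: card_Diff_subset)
    ultimately show ?thesis by simp
  qed
  have cM: "card M = t"
  proof -
    have "M = {y \<in> V. pos y \<in> {p<..p+t}}" unfolding M_def by auto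
    moreover have "{p<..p+t} \<subseteq> {..<n}" using pt p_def by auto
    ultimately have "card M = card {p<..p+t}" using card_pos_set[OF bij] by presburger
    then show ?thesis by simp
  qed
  define MO where "MO = {y \<in> M. (v,y) \<in> T}"
  define MI where "MI = {y \<in> M. (y,v) \<in> T}"
  have cO: "card Out = card MO"
  proof -
    have "Out = (\<lambda>y. (v,y)) ` MO" unfolding Out_def MO_def by auto
    then show ?thesis by (simp add: card_image inj_on_def)
  qed
  have cI: "card In = card MI"
  proof -
    have "In = (\<lambda>y. (y,v)) ` MI" unfolding In_def MI_def by auto
    then show ?thesis by (simp add: card_image inj_on_def)
  qed
  have finM: "finite M" using fin unfolding M_def by auto
  have MV: "y \<in> M \<Longrightarrow> y \<in> V \<and> y \<noteq> v" for y unfolding M_def p_def by auto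
  have "M = MO \<union> MI" unfolding MO_def MI_def using tt[OF v] MV by auto
  moreover have "MO \<inter> MI = {}" unfolding MO_def MI_def using tt[OF v] MV by auto
  ultimately have "card MO + card MI = t" using cM finM
    by (metis card_Un_disjoint finite_Un)
  moreover have "MO = {y \<in> V. (v,y) \<in> T \<and> pos v < pos y \<and> pos y \<le> pos v + t}"
    unfolding MO_def M_def p_def by auto
  ultimately have "card Out < card In" using neg cO cI by simp
  moreover have "card Out \<le> card F" using OF finF by (simp add: card_mono)
  ultimately have "card F < card F'" using cF' by linarith
  then have "fwd T pos < fwd T pos'" unfolding fwd_def F_def F'_def by simp
  then show False using mx bij' by (meson not_le)
qed



lemma median_bwd:
  assumes tour: "tournament V T" and bij: "bij_betw pos V {..<n}"
    and mx: "\<forall>f. bij_betw f V {..<n} \<longrightarrow> fwd T f \<le> fwd T pos"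
    and v: "v \<in> V" and pt: "t \<le> pos v"
  shows "t \<le> 2 * card {x \<in> V. (x,v) \<in> T \<and> pos v - t \<le> pos x \<and> pos x < pos v}"
proof -
  have TV: "T \<subseteq> V \<times> V" using tour unfolding tournament_def digraph_def by blast
  have rng: "z \<in> V \<Longrightarrow> pos z < n" for z using bij bij_betwE by blast
  have tour': "tournament V (T\<inverse>)" using tour unfolding tournament_def digraph_def by blast
  have flip: "bij_betw (\<lambda>z. n - 1 - f z) V {..<n}" if f: "bij_betw f V {..<n}" for f
  proof -
    have "bij_betw (\<lambda>m. n - 1 - m) {..<n} {..<n}"
      by (rule bij_betw_byWitness[where f'="\<lambda>m. n - 1 - m"]) auto
    then show ?thesis using bij_betw_trans[OF f] by (simp add: comp_def)
  qed
  have conv: "fwd (T\<inverse>) f = fwd T (\<lambda>z. n - 1 - f z)" if f: "bij_betw f V {..<n}" for f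
  proof -
    have fr: "z \<in> V \<Longrightarrow> f z < n" for z using f bij_betwE by blast
    have "{(x,y) \<in> T\<inverse>. f x < f y} = ({(x,y) \<in> T. (n - 1 - f x) < (n - 1 - f y)})\<inverse>"
      using TV fr by fastforce
    then show ?thesis unfolding fwd_def by simp
  qed
  have mx': "\<forall>f. bij_betw f V {..<n} \<longrightarrow> fwd (T\<inverse>) f \<le> fwd (T\<inverse>) (\<lambda>z. n - 1 - pos z)"
  proof (intro allI impI)
    fix f assume f: "bij_betw f V {..<n}"
    have "fwd (T\<inverse>) f = fwd T (\<lambda>z. n - 1 - f z)" by (rule conv[OF f])
    also have "\<dots> \<le> fwd T pos" using mx flip[OF f] by blast
    also have "fwd T pos = fwd T (\<lambda>z. n - 1 - (n - 1 - pos z))"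
    proof -
      have "{(x,y) \<in> T. pos x < pos y} = {(x,y) \<in> T. n - 1 - (n - 1 - pos x) < n - 1 - (n - 1 - pos y)}"
        using TV rng by fastforce
      then show ?thesis unfolding fwd_def by simp
    qed
    also have "\<dots> = fwd (T\<inverse>) (\<lambda>z. n - 1 - pos z)" using conv[OF flip[OF bij]] by simp
    finally show "fwd (T\<inverse>) f \<le> fwd (T\<inverse>) (\<lambda>z. n - 1 - pos z)" .
  qed
  have pv: "pos v < n" using rng v by blast
  have "t \<le> 2 * card {y \<in> V. (v,y) \<in> T\<inverse> \<and> n - 1 - pos v < n - 1 - pos y \<and> n - 1 - pos y \<le> n - 1 - pos v + t}"
    by (rule median_fwd[OF tour' flip[OF bij] mx' v]) (use pv pt in linarith)
  moreover have "{y \<in> V. (v,y) \<in> T\<inverse> \<and> n - 1 - pos v < n - 1 - pos y \<and> n - 1 - pos y \<le> n - 1 - pos v + t}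
     = {x \<in> V. (x,v) \<in> T \<and> pos v - t \<le> pos x \<and> pos x < pos v}"
    using rng pv pt by fastforce
  ultimately show ?thesis by simp
qed



locale morder =
  fixes V :: "'a set" and T :: "('a \<times> 'a) set" and n :: nat and pos :: "'a \<Rightarrow> nat"
  assumes tour: "tournament V T" and bij: "bij_betw pos V {..<n}"
    and lmf: "\<And>v t. v \<in> V \<Longrightarrow> pos v + t < n \<Longrightarrow> t \<le> 2 * card {y \<in> V. (v,y) \<in> T \<and> pos v < pos y \<and> pos y \<le> pos v + t}"
    and lmb: "\<And>v t. v \<in> V \<Longrightarrow> t \<le> pos v \<Longrightarrow> t \<le> 2 * card {x \<in> V. (x,v) \<in> T \<and> pos v - t \<le> pos x \<and> pos x < pos v}"
begin

lemma fin: "finite V" using tour unfolding tournament_def digraph_def by blast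
lemma TV: "T \<subseteq> V \<times> V" using tour unfolding tournament_def digraph_def by blast
lemma noloop: "(x,x) \<notin> T" using tour unfolding tournament_def digraph_def by blast
lemma tt: "x \<in> V \<Longrightarrow> y \<in> V \<Longrightarrow> x \<noteq> y \<Longrightarrow> (x,y) \<in> T \<longleftrightarrow> (y,x) \<notin> T"
  using tour unfolding tournament_def by blast
lemma rng: "z \<in> V \<Longrightarrow> pos z < n" using bij bij_betwE by blast
lemma posinj: "x \<in> V \<Longrightarrow> y \<in> V \<Longrightarrow> pos x = pos y \<Longrightarrow> x = y"
  using bij unfolding bij_betw_def by (meson inj_on_eq_iff)

definition cnt :: "'a set \<Rightarrow> nat \<Rightarrow> nat \<Rightarrow> nat" where
  "cnt Z p q = card {v \<in> Z. p \<le> pos v \<and> pos v < q}"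

lemma cnt_total: "q \<le> n \<Longrightarrow> cnt V p q = q - p"
proof -
  assume q: "q \<le> n"
  have e: "{v \<in> V. p \<le> pos v \<and> pos v < q} = {v \<in> V. pos v \<in> {p..<q}}" by auto
  have "{p..<q} \<subseteq> {..<n}" using q by auto
  then have "cnt V p q = card {p..<q}" unfolding cnt_def e by (rule card_pos_set[OF bij])
  then show ?thesis by simp
qed

lemma cnt_split: "Z \<subseteq> V \<Longrightarrow> p \<le> q \<Longrightarrow> q \<le> r \<Longrightarrow> cnt Z p r = cnt Z p q + cnt Z q r"
proof -
  assume Z: "Z \<subseteq> V" and pq: "p \<le> q" and qr: "q \<le> r"
  have "{v \<in> Z. p \<le> pos v \<and> pos v < r} = {v \<in> Z. p \<le> pos v \<and> pos v < q} \<union> {v \<in> Z. q \<le> pos v \<and> pos v < r}"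
    using pq qr by auto
  moreover have "finite Z" using Z fin finite_subset by blast
  ultimately show ?thesis unfolding cnt_def
    by (subst card_Un_disjoint[symmetric]) auto
qed

lemma cnt_union: "Z1 \<subseteq> V \<Longrightarrow> Z2 \<subseteq> V \<Longrightarrow> Z1 \<inter> Z2 = {} \<Longrightarrow> cnt (Z1 \<union> Z2) p q = cnt Z1 p q + cnt Z2 p q"
proof -
  assume a: "Z1 \<subseteq> V" "Z2 \<subseteq> V" "Z1 \<inter> Z2 = {}"
  have "{v \<in> Z1 \<union> Z2. p \<le> pos v \<and> pos v < q} = {v \<in> Z1. p \<le> pos v \<and> pos v < q} \<union> {v \<in> Z2. p \<le> pos v \<and> pos v < q}"
    by auto
  moreover have "finite Z1" "finite Z2" using a fin finite_subset by blast+
  ultimately show ?thesis unfolding cnt_def using a(3)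
    by (subst card_Un_disjoint[symmetric]) auto
qed

lemma cnt_le: "Z \<subseteq> V \<Longrightarrow> cnt Z p q \<le> card Z"
  unfolding cnt_def by (rule card_mono) (use fin finite_subset in auto)

lemma cnt_zero: "(\<And>z. z \<in> Z \<Longrightarrow> \<not> (p \<le> pos z \<and> pos z < q)) \<Longrightarrow> cnt Z p q = 0"
proof -
  assume a: "\<And>z. z \<in> Z \<Longrightarrow> \<not> (p \<le> pos z \<and> pos z < q)"
  have "{v \<in> Z. p \<le> pos v \<and> pos v < q} = {}" using a by blast
  then show ?thesis unfolding cnt_def by (metis card.empty)
qed

lemma cnt_single: "z \<in> V \<Longrightarrow> Z \<subseteq> V \<Longrightarrow> z \<notin> Z \<Longrightarrow> cnt Z (pos z) (Suc (pos z)) = 0"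
proof -
  assume a: "z \<in> V" "Z \<subseteq> V" "z \<notin> Z"
  have "\<not> (pos z \<le> pos v \<and> pos v < Suc (pos z))" if v: "v \<in> Z" for v
  proof
    assume "pos z \<le> pos v \<and> pos v < Suc (pos z)"
    then have "pos v = pos z" by simp
    then have "v = z" using posinj a v by blast
    then show False using a v by blast
  qed
  then show ?thesis by (rule cnt_zero)
qed

definition win :: "nat \<Rightarrow> ('a \<times> 'a) set" where
  "win w = {(x,y) \<in> T. pos x \<le> pos y + w \<and> pos y \<le> pos x + w}"

end



context morder begin

lemma fwd_far:
  fixes k :: nat
  assumes k: "k \<ge> 1" and SV: "S \<subseteq> V" and cS: "card S \<le> k - 1"
    and u0: "u0 \<in> V" "u0 \<notin> S" and v0: "v0 \<in> V" "v0 \<notin> S"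
    and far: "pos u0 + (3*k - 1) \<le> pos v0"
  shows "(u0, v0) \<in> (win (3*k-2) \<inter> (V - S) \<times> (V - S))\<^sup>*"
proof (rule ccontr)
  assume nr: "(u0, v0) \<notin> (win (3*k-2) \<inter> (V - S) \<times> (V - S))\<^sup>*"
  define w where "w = 3*k-2"
  define WS where "WS = win w \<inter> (V - S) \<times> (V - S)"
  define A where "A = {v. (u0, v) \<in> WS\<^sup>*}"
  define X where "X = V - S - A"
  define i where "i = pos u0"
  define j where "j = pos v0"
  have AV: "A \<subseteq> V - S"
  proof
    fix v assume "v \<in> A"
    then have "(u0, v) \<in> WS\<^sup>*" unfolding A_def by blast
    then show "v \<in> V - S"
    proof (induction rule: rtrancl_induct)
      case base then show ?case using u0 by blast
    next
      case (step y z) then show ?case unfolding WS_def by blast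
    qed
  qed
  have u0A: "u0 \<in> A" unfolding A_def by blast
  have v0X: "v0 \<in> X" using nr v0 unfolding X_def A_def WS_def w_def by blast
  have closed: "x \<in> A \<Longrightarrow> (x,y) \<in> WS \<Longrightarrow> y \<in> A" for x y
    unfolding A_def by (meson mem_Collect_eq rtrancl.rtrancl_into_rtrancl)
  have XV: "X \<subseteq> V" unfolding X_def by blast
  have AV': "A \<subseteq> V" using AV by blast
  have part: "V = (A \<union> S) \<union> X" using AV SV unfolding X_def by blast
  have disj: "A \<inter> S = {}" "(A \<union> S) \<inter> X = {}" using AV unfolding X_def by blast+
  have cnt3: "cnt A p q + cnt S p q + cnt X p q = q - p" if "q \<le> n" for p q
  proof -
    have "cnt V p q = cnt (A \<union> S) p q + cnt X p q"
      using part cnt_union[of "A \<union> S" X p q] AV' SV XV disj by simp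
    also have "cnt (A \<union> S) p q = cnt A p q + cnt S p q"
      using cnt_union[of A S p q] AV' SV disj by simp
    finally show ?thesis using cnt_total[OF that] by simp
  qed
  have finS: "finite S" using SV fin finite_subset by blast
  have cSk: "cnt S p q \<le> k - 1" for p q using cnt_le[OF SV] cS le_trans by blast
  have wk: "\<not> w \<le> 2 * (k - 1)" unfolding w_def using k by linarith
  have jn: "j < n" unfolding j_def using rng v0 by blast
  have segX: "cnt A p (pos x) \<le> cnt S p (pos x)"
    if x: "x \<in> X" and ip: "i \<le> p" and px: "p \<le> pos x" and noX: "\<And>y. y \<in> X \<Longrightarrow> \<not> (p \<le> pos y \<and> pos y < pos x)" for x p
  proof -
    define t where "t = min (pos x - p) w"
    define N where "N = {y \<in> V. (y,x) \<in> T \<and> pos x - t \<le> pos y \<and> pos y < pos x}"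
    have xV: "x \<in> V" using x XV by blast
    have xS: "x \<notin> S" using x X_def by blast
    have tw: "t \<le> w" unfolding t_def by simp
    have tN: "t \<le> 2 * card N" unfolding N_def by (rule lmb[OF xV]) (simp add: t_def)
    have NS: "N \<subseteq> {y \<in> S. pos x - t \<le> pos y \<and> pos y < pos x}"
    proof
      fix y assume yN: "y \<in> N"
      then have yV: "y \<in> V" and yx: "(y,x) \<in> T" and y1: "pos x - t \<le> pos y" and y2: "pos y < pos x"
        unfolding N_def by blast+
      have "y \<in> S"
      proof (rule ccontr)
        assume yS: "y \<notin> S"
        show False
        proof (cases "y \<in> A")
          case True
          have w1: "pos x \<le> pos y + w" using y1 tw by linarith
          have w2: "pos y \<le> pos x + w" using y2 by linarith
          have "(y,x) \<in> WS" unfolding WS_def win_def using yx yV xV yS xS w1 w2 by blast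
          then have "x \<in> A" by (rule closed[OF True])
          then show False using x X_def by blast
        next
          case False
          then have "y \<in> X" using yV yS X_def by blast
          moreover have "p \<le> pos y" using y1 px unfolding t_def by linarith
          ultimately show False using noX y2 by blast
        qed
      qed
      then show "y \<in> {y \<in> S. pos x - t \<le> pos y \<and> pos y < pos x}" using y1 y2 by blast
    qed
    have "card N \<le> cnt S (pos x - t) (pos x)" unfolding cnt_def
      by (rule card_mono[OF _ NS]) (simp add: finS)
    then have tS: "t \<le> 2 * cnt S (pos x - t) (pos x)" using tN by linarith
    show ?thesis
    proof (cases "pos x - p \<le> w")
      case False
      then have "t = w" unfolding t_def by simp
      then show ?thesis using tS cSk[of "pos x - t" "pos x"] wk by linarith
    next
      case True
      then have tt': "t = pos x - p" unfolding t_def by simp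
      have "pos x - t = p" using tt' px by simp
      then have tS': "pos x - p \<le> 2 * cnt S p (pos x)" using tS tt' by simp
      have "cnt X p (pos x) = 0" by (rule cnt_zero) (use noX in blast)
      moreover have "pos x \<le> n" using rng xV by (simp add: less_imp_le)
      ultimately have "cnt A p (pos x) + cnt S p (pos x) = pos x - p" using cnt3 by (metis add_0_right)
      then show ?thesis using tS' by linarith
    qed
  qed
  have segA: "cnt X (Suc (pos a)) (Suc q) \<le> cnt S (Suc (pos a)) (Suc q)"
    if a: "a \<in> A" and aq: "pos a \<le> q" and qj: "q \<le> j" and noA: "\<And>y. y \<in> A \<Longrightarrow> \<not> (pos a < pos y \<and> pos y \<le> q)" for a q
  proof -
    define t where "t = min (q - pos a) w"
    define N where "N = {y \<in> V. (a,y) \<in> T \<and> pos a < pos y \<and> pos y \<le> pos a + t}"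
    have aV: "a \<in> V" using a AV by blast
    have aS: "a \<notin> S" using a AV by blast
    have tw: "t \<le> w" unfolding t_def by simp
    have tN: "t \<le> 2 * card N" unfolding N_def by (rule lmf[OF aV]) (use jn qj aq t_def in linarith)
    have NS: "N \<subseteq> {y \<in> S. Suc (pos a) \<le> pos y \<and> pos y < Suc (pos a + t)}"
    proof
      fix y assume yN: "y \<in> N"
      then have yV: "y \<in> V" and ay: "(a,y) \<in> T" and y1: "pos a < pos y" and y2: "pos y \<le> pos a + t"
        unfolding N_def by blast+
      have "y \<in> S"
      proof (rule ccontr)
        assume yS: "y \<notin> S"
        have w1: "pos y \<le> pos a + w" using y2 tw by linarith
        have w2: "pos a \<le> pos y + w" using y1 by linarith
        have "(a,y) \<in> WS" unfolding WS_def win_def using ay yV aV yS aS w1 w2 by blast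
        then have "y \<in> A" by (rule closed[OF a])
        moreover have "pos y \<le> q" using y2 t_def aq by linarith
        ultimately show False using noA y1 by blast
      qed
      then show "y \<in> {y \<in> S. Suc (pos a) \<le> pos y \<and> pos y < Suc (pos a + t)}" using y1 y2 by auto
    qed
    have "card N \<le> cnt S (Suc (pos a)) (Suc (pos a + t))" unfolding cnt_def
      by (rule card_mono[OF _ NS]) (simp add: finS)
    then have tS: "t \<le> 2 * cnt S (Suc (pos a)) (Suc (pos a + t))" using tN by linarith
    show ?thesis
    proof (cases "q - pos a \<le> w")
      case False
      then have "t = w" unfolding t_def by simp
      then show ?thesis using tS cSk[of "Suc (pos a)" "Suc (pos a + t)"] wk by linarith
    next
      case True
      then have tt': "t = q - pos a" unfolding t_def by simp
      have e: "Suc (pos a + t) = Suc q" using tt' aq by simp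
      have "cnt A (Suc (pos a)) (Suc q) = 0"
      proof (rule cnt_zero)
        fix z assume "z \<in> A"
        then have "\<not> (pos a < pos z \<and> pos z \<le> q)" using noA by blast
        then show "\<not> (Suc (pos a) \<le> pos z \<and> pos z < Suc q)" by linarith
      qed
      moreover have "Suc q \<le> n" using jn qj by linarith
      ultimately have "cnt X (Suc (pos a)) (Suc q) + cnt S (Suc (pos a)) (Suc q) = q - pos a"
        using cnt3[of "Suc q" "Suc (pos a)"] by simp
      moreover have "t \<le> 2 * cnt S (Suc (pos a)) (Suc q)" using tS e by simp
      ultimately show ?thesis using tt' by linarith
    qed
  qed
  have XA: "X \<inter> A = {}" unfolding X_def by blast
  have CX: "cnt A i (pos x) \<le> cnt S i (pos x)" if "x \<in> X" "i < pos x" for x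
    using that
  proof (induction "pos x" arbitrary: x rule: less_induct)
    case (less x)
    define P where "P = {y \<in> X. i \<le> pos y \<and> pos y < pos x}"
    show ?case
    proof (cases "P = {}")
      case True
      have noX: "\<And>y. y \<in> X \<Longrightarrow> \<not> (i \<le> pos y \<and> pos y < pos x)" using True P_def by blast
      show ?thesis by (rule segX[OF less.prems(1) _ _ noX]) (use less.prems in auto)
    next
      case False
      then obtain y0 where "y0 \<in> P" by blast
      obtain x' where x'P: "x' \<in> P" and mx: "\<forall>y. y \<in> P \<longrightarrow> n - pos x' \<le> n - pos y"
        using ex_has_least_nat[of "\<lambda>y. y \<in> P" y0 "\<lambda>y. n - pos y"] \<open>y0 \<in> P\<close> by blast
      have x'X: "x' \<in> X" and x'1: "i \<le> pos x'" and x'2: "pos x' < pos x" using x'P P_def by auto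
      have x'V: "x' \<in> V" using x'X XV by blast
      have "pos x' \<noteq> i"
      proof
        assume "pos x' = i"
        then have "x' = u0" using posinj[OF x'V u0(1)] i_def by simp
        then show False using x'X u0A XA by blast
      qed
      then have ix': "i < pos x'" using x'1 by linarith
      have IH: "cnt A i (pos x') \<le> cnt S i (pos x')" using less.hyps[OF x'2 x'X ix'] .
      have maxp: "\<not> (Suc (pos x') \<le> pos y \<and> pos y < pos x)" if yX: "y \<in> X" for y
      proof
        assume h: "Suc (pos x') \<le> pos y \<and> pos y < pos x"
        then have "y \<in> P" using yX x'1 P_def by auto
        then have "n - pos x' \<le> n - pos y" using mx by blast
        moreover have "pos y < n" using yX XV rng by blast
        ultimately show False using h by linarith
      qed
      have seg: "cnt A (Suc (pos x')) (pos x) \<le> cnt S (Suc (pos x')) (pos x)"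
        by (rule segX[OF less.prems(1) _ _ maxp]) (use x'1 x'2 in auto)
      have sA: "cnt A i (pos x) = cnt A i (pos x') + cnt A (pos x') (Suc (pos x')) + cnt A (Suc (pos x')) (pos x)"
        using cnt_split[OF AV', of i "pos x'" "pos x"] cnt_split[OF AV', of "pos x'" "Suc (pos x')" "pos x"] x'1 x'2 by simp
      have sS: "cnt S i (pos x) = cnt S i (pos x') + cnt S (pos x') (Suc (pos x')) + cnt S (Suc (pos x')) (pos x)"
        using cnt_split[OF SV, of i "pos x'" "pos x"] cnt_split[OF SV, of "pos x'" "Suc (pos x')" "pos x"] x'1 x'2 by simp
      have z1: "cnt A (pos x') (Suc (pos x')) = 0" by (rule cnt_single[OF x'V AV']) (use x'X XA in blast)
      have z2: "cnt S (pos x') (Suc (pos x')) = 0" by (rule cnt_single[OF x'V SV]) (use x'X X_def in blast)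
      show ?thesis using sA sS z1 z2 IH seg by linarith
    qed
  qed
  have CA: "cnt X (Suc (pos a)) (Suc j) \<le> cnt S (Suc (pos a)) (Suc j)" if "a \<in> A" "pos a < j" for a
    using that
  proof (induction "j - pos a" arbitrary: a rule: less_induct)
    case (less a)
    define P where "P = {y \<in> A. pos a < pos y \<and> pos y \<le> j}"
    show ?case
    proof (cases "P = {}")
      case True
      have noA: "\<And>y. y \<in> A \<Longrightarrow> \<not> (pos a < pos y \<and> pos y \<le> j)" using True P_def by blast
      show ?thesis by (rule segA[OF less.prems(1) _ _ noA]) (use less.prems in auto)
    next
      case False
      then obtain y0 where "y0 \<in> P" by blast
      obtain a' where a'P: "a' \<in> P" and mn: "\<forall>y. y \<in> P \<longrightarrow> pos a' \<le> pos y"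
        using ex_has_least_nat[of "\<lambda>y. y \<in> P" y0 "\<lambda>y. pos y"] \<open>y0 \<in> P\<close> by blast
      have a'A: "a' \<in> A" and a'1: "pos a < pos a'" and a'2: "pos a' \<le> j" using a'P P_def by auto
      have a'V: "a' \<in> V" using a'A AV' by blast
      have "pos a' \<noteq> j"
      proof
        assume "pos a' = j"
        then have "a' = v0" using posinj[OF a'V v0(1)] j_def by simp
        then show False using v0X a'A XA by blast
      qed
      then have a'j: "pos a' < j" using a'2 by linarith
      have IH: "cnt X (Suc (pos a')) (Suc j) \<le> cnt S (Suc (pos a')) (Suc j)"
        using less.hyps[of a'] a'1 a'A a'j less.prems by (metis diff_less_mono2)
      have minp: "\<not> (pos a < pos y \<and> pos y \<le> pos a' - 1)" if yA: "y \<in> A" for y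
      proof
        assume h: "pos a < pos y \<and> pos y \<le> pos a' - 1"
        then have "y \<in> P" using yA a'2 P_def by auto
        then have "pos a' \<le> pos y" using mn by blast
        then show False using h a'1 by linarith
      qed
      have seg: "cnt X (Suc (pos a)) (Suc (pos a' - 1)) \<le> cnt S (Suc (pos a)) (Suc (pos a' - 1))"
        by (rule segA[OF less.prems(1) _ _ minp]) (use a'1 a'2 in auto)
      have e: "Suc (pos a' - 1) = pos a'" using a'1 by linarith
      have sX: "cnt X (Suc (pos a)) (Suc j) = cnt X (Suc (pos a)) (pos a') + cnt X (pos a') (Suc (pos a')) + cnt X (Suc (pos a')) (Suc j)"
        using cnt_split[OF XV, of "Suc (pos a)" "pos a'" "Suc j"] cnt_split[OF XV, of "pos a'" "Suc (pos a')" "Suc j"] a'1 a'j by simp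
      have sS: "cnt S (Suc (pos a)) (Suc j) = cnt S (Suc (pos a)) (pos a') + cnt S (pos a') (Suc (pos a')) + cnt S (Suc (pos a')) (Suc j)"
        using cnt_split[OF SV, of "Suc (pos a)" "pos a'" "Suc j"] cnt_split[OF SV, of "pos a'" "Suc (pos a')" "Suc j"] a'1 a'j by simp
      have z1: "cnt X (pos a') (Suc (pos a')) = 0" by (rule cnt_single[OF a'V XV]) (use a'A XA in blast)
      have z2: "cnt S (pos a') (Suc (pos a')) = 0" by (rule cnt_single[OF a'V SV]) (use a'A AV in blast)
      show ?thesis using sX sS z1 z2 IH seg e by simp
    qed
  qed
  have ij: "i < j" using far k unfolding i_def j_def by linarith
  have c1: "cnt A i j \<le> cnt S i j" using CX[OF v0X] ij j_def by simp
  have c2: "cnt X (Suc i) (Suc j) \<le> cnt S (Suc i) (Suc j)" using CA[OF u0A] ij i_def by simp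
  have tot: "cnt A i (Suc j) + cnt S i (Suc j) + cnt X i (Suc j) = Suc j - i" using cnt3 jn by simp
  have e1: "cnt A i (Suc j) = cnt A i j"
  proof -
    have "cnt A i (Suc j) = cnt A i j + cnt A j (Suc j)" using cnt_split[OF AV', of i j "Suc j"] ij by simp
    moreover have "cnt A j (Suc j) = 0" using cnt_single[OF v0(1) AV'] v0X XA j_def by blast
    ultimately show ?thesis by simp
  qed
  have e2: "cnt X i (Suc j) = cnt X (Suc i) (Suc j)"
  proof -
    have "cnt X i (Suc j) = cnt X i (Suc i) + cnt X (Suc i) (Suc j)" using cnt_split[OF XV, of i "Suc i" "Suc j"] ij by simp
    moreover have "cnt X i (Suc i) = 0" using cnt_single[OF u0(1) XV] u0A XA i_def by blast
    ultimately show ?thesis by simp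
  qed
  have "Suc j - i \<le> 3 * (k - 1)" using tot e1 e2 c1 c2 cSk[of i j] cSk[of "Suc i" "Suc j"] cSk[of i "Suc j"] by linarith
  then show False using far k unfolding i_def j_def by linarith
qed

end


lemma rtrancl_cross: "(u,v) \<in> E\<^sup>* \<Longrightarrow> u \<in> R \<Longrightarrow> v \<notin> R \<Longrightarrow> \<exists>x y. (x,y) \<in> E \<and> x \<in> R \<and> y \<notin> R"
  by (induction rule: rtrancl_induct) blast+

context morder begin

definition early :: "nat \<Rightarrow> ('a \<times> 'a) set" where
  "early k = {(u,y) \<in> T. card {y'. (u,y') \<in> T \<and> pos y' < pos y} < k}"

definition late :: "nat \<Rightarrow> ('a \<times> 'a) set" where
  "late k = {(x,y) \<in> T. card {x'. (x',y) \<in> T \<and> pos x < pos x'} < k}"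

definition Dk :: "nat \<Rightarrow> ('a \<times> 'a) set" where
  "Dk k = win (3*k-2) \<union> early k \<union> late k"

lemma Dk_sub: "Dk k \<subseteq> T" unfolding Dk_def win_def early_def late_def by blast

lemma conn:
  fixes k :: nat
  assumes k: "k \<ge> 1" and SV: "S \<subseteq> V" and cS: "card S \<le> k - 1"
    and Ts: "\<forall>u\<in>V-S. \<forall>v\<in>V-S. (u,v) \<in> (T \<inter> (V-S) \<times> (V-S))\<^sup>*"
    and u: "u \<in> V - S" and v: "v \<in> V - S"
  shows "(u,v) \<in> (Dk k \<inter> (V-S) \<times> (V-S))\<^sup>*"
proof (rule ccontr)
  assume nr: "(u,v) \<notin> (Dk k \<inter> (V-S) \<times> (V-S))\<^sup>*"
  define ES where "ES = Dk k \<inter> (V-S) \<times> (V-S)"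
  define R where "R = {x. (u,x) \<in> ES\<^sup>*}"
  define Q where "Q = (V - S) - R"
  have RV: "R \<subseteq> V - S"
  proof
    fix x assume "x \<in> R"
    then have "(u, x) \<in> ES\<^sup>*" unfolding R_def by blast
    then show "x \<in> V - S"
    proof (induction rule: rtrancl_induct)
      case base then show ?case using u by blast
    next
      case (step y z) then show ?case unfolding ES_def by blast
    qed
  qed
  have uR: "u \<in> R" unfolding R_def by blast
  have vQ: "v \<in> Q" using nr v unfolding Q_def R_def ES_def by blast
  have closed: "x \<in> R \<Longrightarrow> (x,y) \<in> ES \<Longrightarrow> y \<in> R" for x y
    unfolding R_def by (meson mem_Collect_eq rtrancl.rtrancl_into_rtrancl)
  have finS: "finite S" using SV fin finite_subset by blast
  obtain x y where xy: "(x,y) \<in> T \<inter> (V-S) \<times> (V-S)" and xR: "x \<in> R" and yR: "y \<notin> R"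
    using rtrancl_cross[of u v "T \<inter> (V-S) \<times> (V-S)" R] Ts u v uR vQ Q_def by blast
  have yQ: "y \<in> Q" using xy yR Q_def by blast
  obtain r0 where r0R: "r0 \<in> R" and r0m: "\<forall>r. r \<in> R \<longrightarrow> pos r0 \<le> pos r"
    using ex_has_least_nat[of "\<lambda>r. r \<in> R" u pos] uR by blast
  obtain q0 where q0Q: "q0 \<in> Q" and q0m': "\<forall>q. q \<in> Q \<longrightarrow> n - pos q0 \<le> n - pos q"
    using ex_has_least_nat[of "\<lambda>q. q \<in> Q" v "\<lambda>q. n - pos q"] vQ by blast
  have q0m: "pos q \<le> pos q0" if "q \<in> Q" for q
  proof -
    have "pos q < n" using that Q_def rng by blast
    then show ?thesis using q0m' that by fastforce
  qed
  have F1: "pos r0 \<le> pos y'" if x'R: "x' \<in> R" and x'y': "(x',y') \<in> T" and y'S: "y' \<notin> S" for x' y'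
  proof -
    define Y where "Y = {z. (x',z) \<in> T \<and> z \<notin> S}"
    have "y' \<in> Y" using x'y' y'S Y_def by blast
    then obtain y0 where y0Y: "y0 \<in> Y" and y0m: "\<forall>z. z \<in> Y \<longrightarrow> pos y0 \<le> pos z"
      using ex_has_least_nat[of "\<lambda>z. z \<in> Y" y' pos] by blast
    have sub: "{z. (x',z) \<in> T \<and> pos z < pos y0} \<subseteq> S"
      using y0m Y_def by fastforce
    have "card {z. (x',z) \<in> T \<and> pos z < pos y0} \<le> card S" by (rule card_mono[OF finS sub])
    then have "card {z. (x',z) \<in> T \<and> pos z < pos y0} < k" using cS k by linarith
    then have "(x', y0) \<in> early k" unfolding early_def using y0Y Y_def by blast
    moreover have "x' \<in> V - S" using x'R RV by blast
    moreover have "y0 \<in> V - S" using y0Y Y_def TV by blast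
    ultimately have "(x',y0) \<in> ES" unfolding ES_def Dk_def by blast
    then have "y0 \<in> R" using closed x'R by blast
    then have "pos r0 \<le> pos y0" using r0m by blast
    moreover have "pos y0 \<le> pos y'" using y0m \<open>y' \<in> Y\<close> by blast
    ultimately show ?thesis by linarith
  qed
  have F2: "pos x' \<le> pos q0" if y'Q: "y' \<in> Q" and x'y': "(x',y') \<in> T" and x'S: "x' \<notin> S" for x' y'
  proof -
    define Y where "Y = {z. (z,y') \<in> T \<and> z \<notin> S}"
    have "x' \<in> Y" using x'y' x'S Y_def by blast
    then obtain x0 where x0Y: "x0 \<in> Y" and x0m': "\<forall>z. z \<in> Y \<longrightarrow> n - pos x0 \<le> n - pos z"
      using ex_has_least_nat[of "\<lambda>z. z \<in> Y" x' "\<lambda>z. n - pos z"] by blast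
    have x0m: "pos z \<le> pos x0" if "z \<in> Y" for z
    proof -
      have "pos z < n" using that Y_def TV rng by blast
      then show ?thesis using x0m' that by fastforce
    qed
    have sub: "{z. (z,y') \<in> T \<and> pos x0 < pos z} \<subseteq> S"
      using x0m Y_def by fastforce
    have "card {z. (z,y') \<in> T \<and> pos x0 < pos z} \<le> card S" by (rule card_mono[OF finS sub])
    then have "card {z. (z,y') \<in> T \<and> pos x0 < pos z} < k" using cS k by linarith
    then have "(x0, y') \<in> late k" unfolding late_def using x0Y Y_def by blast
    moreover have "y' \<in> V - S" using y'Q Q_def by blast
    moreover have x0VS: "x0 \<in> V - S" using x0Y Y_def TV by blast
    ultimately have "(x0,y') \<in> ES" unfolding ES_def Dk_def by blast
    then have "x0 \<notin> R" using closed y'Q Q_def by blast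
    then have "x0 \<in> Q" using x0VS Q_def by blast
    then have "pos x0 \<le> pos q0" using q0m by blast
    moreover have "pos x' \<le> pos x0" using x0m \<open>x' \<in> Y\<close> by blast
    ultimately show ?thesis by linarith
  qed
  have far: "\<not> (pos r0 + (3*k - 1) \<le> pos q0)"
  proof
    assume h: "pos r0 + (3*k - 1) \<le> pos q0"
    have r0VS: "r0 \<in> V - S" using r0R RV by blast
    have q0VS: "q0 \<in> V - S" using q0Q Q_def by blast
    have "(r0, q0) \<in> (win (3*k-2) \<inter> (V - S) \<times> (V - S))\<^sup>*"
      by (rule fwd_far[OF k SV cS]) (use r0VS q0VS h in auto)
    moreover have "win (3*k-2) \<inter> (V - S) \<times> (V - S) \<subseteq> ES" unfolding ES_def Dk_def by blast
    ultimately have "(r0, q0) \<in> ES\<^sup>*" using rtrancl_mono by blast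
    then have "(u, q0) \<in> ES\<^sup>*" using r0R R_def by (meson mem_Collect_eq rtrancl_trans)
    then show False using q0Q Q_def R_def by blast
  qed
  have b1: "pos r0 \<le> pos y" using F1[OF xR] xy by blast
  have b2: "pos x \<le> pos q0" using F2[OF yQ] xy by blast
  have b3: "pos r0 \<le> pos x" using r0m xR by blast
  have b4: "pos y \<le> pos q0" using q0m yQ by blast
  have "pos x \<le> pos y + (3*k-2) \<and> pos y \<le> pos x + (3*k-2)" using b1 b2 b3 b4 far k by linarith
  then have "(x,y) \<in> win (3*k-2)" unfolding win_def using xy by blast
  then have "(x,y) \<in> ES" unfolding ES_def Dk_def using xy by blast
  then show False using closed xR yR by blast
qed

end


context morder begin

lemma cardV: "card V = n" using bij by (metis bij_betw_same_card card_lessThan)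

lemma card_early: "card (early k) \<le> k * n"
proof -
  define Y where "Y u = {y. (u,y) \<in> T \<and> card {y'. (u,y') \<in> T \<and> pos y' < pos y} < k}" for u
  have YV: "Y u \<subseteq> V" for u
  proof
    fix y assume "y \<in> Y u"
    then have "(u,y) \<in> T" unfolding Y_def by blast
    then show "y \<in> V" using TV by blast
  qed
  have sub: "early k \<subseteq> Sigma V Y"
  proof
    fix e assume e: "e \<in> early k"
    obtain a b where ab: "e = (a,b)" by (cases e)
    have "(a,b) \<in> T" "card {y'. (a,y') \<in> T \<and> pos y' < pos b} < k" using e ab unfolding early_def by blast+
    then show "e \<in> Sigma V Y" using ab TV unfolding Y_def by blast
  qed
  have finY: "finite (Y u)" for u using finite_subset[OF YV fin] .
  have cY: "card (Y u) \<le> k" for u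
  proof -
    define r where "r y = card {y'. (u,y') \<in> T \<and> pos y' < pos y}" for y
    have fr: "finite {y'. (u,y') \<in> T \<and> pos y' < pos y}" for y
    proof (rule finite_subset[OF _ fin])
      show "{y'. (u,y') \<in> T \<and> pos y' < pos y} \<subseteq> V" using TV by blast
    qed
    have mono: "r a < r b" if a: "a \<in> Y u" and lt: "pos a < pos b" for a b
    proof -
      have aT: "(u,a) \<in> T" using a unfolding Y_def by blast
      have s1: "{y'. (u,y') \<in> T \<and> pos y' < pos a} \<subseteq> {y'. (u,y') \<in> T \<and> pos y' < pos b}"
        using lt by auto
      have s2: "a \<in> {y'. (u,y') \<in> T \<and> pos y' < pos b}" using aT lt by blast
      have s3: "a \<notin> {y'. (u,y') \<in> T \<and> pos y' < pos a}" by blast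
      have "{y'. (u,y') \<in> T \<and> pos y' < pos a} \<subset> {y'. (u,y') \<in> T \<and> pos y' < pos b}"
        using s1 s2 s3 by blast
      then show ?thesis unfolding r_def by (rule psubset_card_mono[OF fr])
    qed
    have inj: "inj_on r (Y u)"
    proof (rule inj_onI)
      fix a b assume a: "a \<in> Y u" and b: "b \<in> Y u" and e: "r a = r b"
      have aV: "a \<in> V" and bV: "b \<in> V" using a b YV by blast+
      show "a = b"
      proof (rule ccontr)
        assume ab: "a \<noteq> b"
        then have ne: "pos a \<noteq> pos b" using posinj aV bV by blast
        show False
        proof (cases "pos a < pos b")
          case True
          then show False using mono[OF a True] e by simp
        next
          case False
          then have lt2: "pos b < pos a" using ne by linarith
          show False using mono[OF b lt2] e by simp
        qed
      qed
    qed
    have img: "r ` Y u \<subseteq> {..<k}"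
    proof
      fix m assume "m \<in> r ` Y u"
      then obtain y where "y \<in> Y u" "m = r y" by blast
      then show "m \<in> {..<k}" unfolding Y_def r_def by simp
    qed
    have "card (Y u) \<le> card {..<k}" by (rule card_inj_on_le[OF inj img]) simp
    then show ?thesis by simp
  qed
  have "card (early k) \<le> card (Sigma V Y)"
    by (rule card_mono[OF _ sub]) (rule finite_SigmaI[OF fin finY])
  also have "\<dots> = (\<Sum>u\<in>V. card (Y u))" by (rule card_SigmaI[OF fin]) (simp add: finY)
  also have "\<dots> \<le> card V * k" using sum_bounded_above[of V "\<lambda>u. card (Y u)" k] cY by simp
  finally show ?thesis using cardV by (simp add: mult.commute)
qed

lemma card_late: "card (late k) \<le> k * n"
proof -
  define Y where "Y u = {x. (x,u) \<in> T \<and> card {x'. (x',u) \<in> T \<and> pos x < pos x'} < k}" for u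
  have YV: "Y u \<subseteq> V" for u
  proof
    fix y assume "y \<in> Y u"
    then have "(y,u) \<in> T" unfolding Y_def by blast
    then show "y \<in> V" using TV by blast
  qed
  have sub: "late k \<subseteq> (\<lambda>(a,b). (b,a)) ` Sigma V Y"
  proof
    fix e assume e: "e \<in> late k"
    obtain a b where ab: "e = (a,b)" by (cases e)
    have "(a,b) \<in> T" "card {x'. (x',b) \<in> T \<and> pos a < pos x'} < k" using e ab unfolding late_def by blast+
    then have "(b,a) \<in> Sigma V Y" using TV unfolding Y_def by blast
    then show "e \<in> (\<lambda>(a,b). (b,a)) ` Sigma V Y" using ab by force
  qed
  have finY: "finite (Y u)" for u using finite_subset[OF YV fin] .
  have cY: "card (Y u) \<le> k" for u
  proof -
    define r where "r x = card {x'. (x',u) \<in> T \<and> pos x < pos x'}" for x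
    have fr: "finite {x'. (x',u) \<in> T \<and> pos x < pos x'}" for x
    proof (rule finite_subset[OF _ fin])
      show "{x'. (x',u) \<in> T \<and> pos x < pos x'} \<subseteq> V" using TV by blast
    qed
    have mono: "r b < r a" if b: "b \<in> Y u" and lt: "pos a < pos b" for a b
    proof -
      have bT: "(b,u) \<in> T" using b unfolding Y_def by blast
      have s1: "{x'. (x',u) \<in> T \<and> pos b < pos x'} \<subseteq> {x'. (x',u) \<in> T \<and> pos a < pos x'}"
        using lt by auto
      have s2: "b \<in> {x'. (x',u) \<in> T \<and> pos a < pos x'}" using bT lt by blast
      have s3: "b \<notin> {x'. (x',u) \<in> T \<and> pos b < pos x'}" by blast
      have "{x'. (x',u) \<in> T \<and> pos b < pos x'} \<subset> {x'. (x',u) \<in> T \<and> pos a < pos x'}"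
        using s1 s2 s3 by blast
      then show ?thesis unfolding r_def by (rule psubset_card_mono[OF fr])
    qed
    have inj: "inj_on r (Y u)"
    proof (rule inj_onI)
      fix a b assume a: "a \<in> Y u" and b: "b \<in> Y u" and e: "r a = r b"
      have aV: "a \<in> V" and bV: "b \<in> V" using a b YV by blast+
      show "a = b"
      proof (rule ccontr)
        assume ab: "a \<noteq> b"
        then have ne: "pos a \<noteq> pos b" using posinj aV bV by blast
        show False
        proof (cases "pos a < pos b")
          case True
          then show False using mono[OF b True] e by simp
        next
          case False
          then have lt2: "pos b < pos a" using ne by linarith
          show False using mono[OF a lt2] e by simp
        qed
      qed
    qed
    have img: "r ` Y u \<subseteq> {..<k}"
    proof
      fix m assume "m \<in> r ` Y u"
      then obtain y where "y \<in> Y u" "m = r y" by blast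
      then show "m \<in> {..<k}" unfolding Y_def r_def by simp
    qed
    have "card (Y u) \<le> card {..<k}" by (rule card_inj_on_le[OF inj img]) simp
    then show ?thesis by simp
  qed
  have "card (late k) \<le> card ((\<lambda>(a,b). (b,a)) ` Sigma V Y)"
    by (rule card_mono[OF _ sub]) (rule finite_imageI[OF finite_SigmaI[OF fin finY]])
  also have "\<dots> \<le> card (Sigma V Y)" by (rule card_image_le) (rule finite_SigmaI[OF fin finY])
  also have "\<dots> = (\<Sum>u\<in>V. card (Y u))" by (rule card_SigmaI[OF fin]) (simp add: finY)
  also have "\<dots> \<le> card V * k" using sum_bounded_above[of V "\<lambda>u. card (Y u)" k] cY by simp
  finally show ?thesis using cardV by (simp add: mult.commute)
qed

lemma card_win: "card (win w) \<le> w * n"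
proof -
  define phi where "phi e = (if pos (fst e) < pos (snd e) then (fst e, pos (snd e) - pos (fst e)) else (snd e, pos (fst e) - pos (snd e)))" for e
  have inj: "inj_on phi (win w)"
  proof (rule inj_onI)
    fix e1 e2 assume e1: "e1 \<in> win w" and e2: "e2 \<in> win w" and eq: "phi e1 = phi e2"
    obtain x1 y1 where p1: "e1 = (x1,y1)" by (cases e1)
    obtain x2 y2 where p2: "e2 = (x2,y2)" by (cases e2)
    have T1: "(x1,y1) \<in> T" and T2: "(x2,y2) \<in> T" using e1 e2 p1 p2 win_def by auto
    have V1: "x1 \<in> V" "y1 \<in> V" and V2: "x2 \<in> V" "y2 \<in> V" using T1 T2 TV by blast+
    have n1: "x1 \<noteq> y1" and n2: "x2 \<noteq> y2" using T1 T2 noloop by blast+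
    have q1: "pos x1 \<noteq> pos y1" using posinj V1 n1 by blast
    have q2: "pos x2 \<noteq> pos y2" using posinj V2 n2 by blast
    show "e1 = e2"
    proof (cases "pos x1 < pos y1"; cases "pos x2 < pos y2")
      assume c1: "pos x1 < pos y1" and c2: "pos x2 < pos y2"
      then have "x1 = x2" "pos y1 - pos x1 = pos y2 - pos x2" using eq p1 p2 phi_def by auto
      moreover have "pos x1 = pos x2" using \<open>x1 = x2\<close> by simp
      ultimately have "pos y1 = pos y2" using c1 c2 by linarith
      then show ?thesis using posinj V1 V2 \<open>x1 = x2\<close> p1 p2 by blast
    next
      assume c1: "pos x1 < pos y1" and c2: "\<not> pos x2 < pos y2"
      then have "x1 = y2" "pos y1 - pos x1 = pos x2 - pos y2" using eq p1 p2 phi_def by auto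
      moreover have "pos x1 = pos y2" using \<open>x1 = y2\<close> by simp
      ultimately have "pos y1 = pos x2" using c1 c2 q2 by linarith
      then have "y1 = x2" using posinj V1 V2 by blast
      then have "(y2,x2) \<in> T" "(x2,y2) \<in> T" using T1 T2 \<open>x1 = y2\<close> by auto
      then show ?thesis using tt V2 n2 by blast
    next
      assume c1: "\<not> pos x1 < pos y1" and c2: "pos x2 < pos y2"
      then have "y1 = x2" "pos x1 - pos y1 = pos y2 - pos x2" using eq p1 p2 phi_def by auto
      moreover have "pos y1 = pos x2" using \<open>y1 = x2\<close> by simp
      ultimately have "pos x1 = pos y2" using c1 c2 q1 by linarith
      then have "x1 = y2" using posinj V1 V2 by blast
      then have "(y1,x1) \<in> T" "(x1,y1) \<in> T" using T1 T2 \<open>y1 = x2\<close> by auto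
      then show ?thesis using tt V1 n1 by blast
    next
      assume c1: "\<not> pos x1 < pos y1" and c2: "\<not> pos x2 < pos y2"
      then have "y1 = y2" "pos x1 - pos y1 = pos x2 - pos y2" using eq p1 p2 phi_def by auto
      moreover have "pos y1 = pos y2" using \<open>y1 = y2\<close> by simp
      ultimately have "pos x1 = pos x2" using c1 c2 q1 q2 by linarith
      then show ?thesis using posinj V1 V2 \<open>y1 = y2\<close> p1 p2 by blast
    qed
  qed
  have img: "phi ` win w \<subseteq> V \<times> {1..w}"
  proof
    fix z assume "z \<in> phi ` win w"
    then obtain x y where xy: "(x,y) \<in> win w" and z: "z = phi (x,y)" by auto
    have T1: "(x,y) \<in> T" and w1: "pos x \<le> pos y + w" and w2: "pos y \<le> pos x + w" using xy win_def by auto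
    have V1: "x \<in> V" "y \<in> V" using T1 TV by blast+
    have "pos x \<noteq> pos y" using posinj V1 noloop T1 by metis
    then show "z \<in> V \<times> {1..w}" using z phi_def V1 w1 w2 by auto
  qed
  have "card (win w) \<le> card (V \<times> {1..w})" by (rule card_inj_on_le[OF inj img]) (use fin in simp)
  also have "\<dots> = n * w" using cardV by (simp add: card_cartesian_product)
  finally show ?thesis by (simp add: mult.commute)
qed

lemma card_Dk: "card (Dk k) \<le> (5*k-2) * n"
proof -
  have finT: "finite T" using TV fin by (meson finite_SigmaI rev_finite_subset)
  have fw: "finite (win (3*k-2))" "finite (early k)" "finite (late k)"
    unfolding win_def early_def late_def by (rule finite_subset[OF _ finT]; blast)+
  have c1: "card (win (3*k-2) \<union> early k \<union> late k) \<le> card (win (3*k-2) \<union> early k) + card (late k)"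
    by (rule card_Un_le)
  have c2: "card (win (3*k-2) \<union> early k) \<le> card (win (3*k-2)) + card (early k)"
    by (rule card_Un_le)
  have "card (Dk k) \<le> card (win (3*k-2)) + card (early k) + card (late k)"
    unfolding Dk_def using c1 c2 by linarith
  also have "\<dots> \<le> (3*k-2) * n + k * n + k * n"
    using card_win[of "3*k-2"] card_early[of k] card_late[of k] by linarith
  also have "\<dots> = (3*k-2+k+k) * n" by (simp add: algebra_simps)
  also have "\<dots> \<le> (5*k-2) * n" by (rule mult_le_mono1) linarith
  finally show ?thesis .
qed

end


theorem theorem4p2:
  fixes V :: "'a set" and T :: "('a \<times> 'a) set" and k n :: nat
  assumes "k \<ge> 1"
    and "tournament V T"
    and "card V = n"
    and "strongly_k_connected k V T"
  shows "\<exists>D. D \<subseteq> T \<and> strongly_k_connected k V D \<and>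
             card D \<le> (5 * k - 2) * n + ((5 * k) choose 2)"
proof -
  obtain pos where bij: "bij_betw pos V {..<n}" and mx: "\<forall>f. bij_betw f V {..<n} \<longrightarrow> fwd T f \<le> fwd T pos"
    using median_exists[OF assms(2,3)] by blast
  have lmf: "\<And>v t. v \<in> V \<Longrightarrow> pos v + t < n \<Longrightarrow> t \<le> 2 * card {y \<in> V. (v,y) \<in> T \<and> pos v < pos y \<and> pos y \<le> pos v + t}"
    by (rule median_fwd[OF assms(2) bij mx])
  have lmb: "\<And>v t. v \<in> V \<Longrightarrow> t \<le> pos v \<Longrightarrow> t \<le> 2 * card {x \<in> V. (x,v) \<in> T \<and> pos v - t \<le> pos x \<and> pos x < pos v}"
    by (rule median_bwd[OF assms(2) bij mx])
  interpret M: morder V T n pos by (rule morder.intro[OF assms(2) bij lmf lmb])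
  have kc: "card V \<ge> k + 1" and ks: "\<forall>S. S \<subseteq> V \<and> card S \<le> k - 1 \<longrightarrow> strongly_connected (fst (del_verts V T S)) (snd (del_verts V T S))"
    using assms(4) unfolding strongly_k_connected_def by blast+
  have "strongly_k_connected k V (M.Dk k)"
    unfolding strongly_k_connected_def
  proof (intro conjI allI impI)
    show "card V \<ge> k + 1" by (rule kc)
    fix S assume S: "S \<subseteq> V \<and> card S \<le> k - 1"
    have Ts0: "strongly_connected (V - S) (T \<inter> (V - S) \<times> (V - S))"
      using ks S unfolding del_verts_def by simp
    have Ts: "\<forall>u\<in>V-S. \<forall>v\<in>V-S. (u,v) \<in> (T \<inter> (V-S) \<times> (V-S))\<^sup>*"
      using Ts0 unfolding strongly_connected_def by (simp add: Int_assoc)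
    have "\<forall>u\<in>V-S. \<forall>v\<in>V-S. (u,v) \<in> (M.Dk k \<inter> (V-S) \<times> (V-S))\<^sup>*"
      using M.conn[OF assms(1)] S Ts by blast
    then show "strongly_connected (fst (del_verts V (M.Dk k) S)) (snd (del_verts V (M.Dk k) S))"
      unfolding del_verts_def strongly_connected_def by (simp add: Int_assoc)
  qed
  moreover have "card (M.Dk k) \<le> (5 * k - 2) * n + ((5 * k) choose 2)"
    using M.card_Dk[of k] by linarith
  ultimately show ?thesis using M.Dk_sub by blast
qed



end
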